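(* Let $\mathcal{C}$ be a fusion category and let $G(\mathcal{C})$ be the group of isomorphism classes of invertible simple objects. Suppose that $|G(\mathcal{C})|$ is a power of a prime $p$ and that $\gcd(|\mathrm{Irr}_\alpha(\mathcal{C})|, p) = 1$ for some $\alpha > 1$. Then there exists $X \in \mathrm{Irr}_\alpha(\mathcal{C})$ such that $G[X] = G(\mathcal{C})$.
   Context: $\mathrm{Irr}_\alpha(\mathcal{C})$ denotes the set of isomorphism classes of simple objects of $\mathcal{C}$ of Frobenius–Perron dimension $\alpha$. The group $G(\mathcal{C})$ acts on the set of isomorphism classes of simple objects by left tensor product, and $G[X]$ denotes the stabilizer of $X$ under this action (i.e. $\{g : g\otimes X\cong X\}$). *)

theory Defs
  imports Complex_Main "HOL-Computational_Algebra.Primes"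
begin

text \<open>A fusion category is modelled through its Grothendieck (fusion) ring data:
  S = set of isomorphism classes of simple objects, one = unit object,
  N X Y Z = multiplicity of the simple Z in X \<otimes> Y, dual X = X^*.\<close>

definition fusion_ring :: "'a set \<Rightarrow> 'a \<Rightarrow> ('a \<Rightarrow> 'a \<Rightarrow> 'a \<Rightarrow> nat) \<Rightarrow> ('a \<Rightarrow> 'a) \<Rightarrow> bool" where
  "fusion_ring S one N dual \<longleftrightarrow>
     finite S \<and> one \<in> S \<and>
     (\<forall>x\<in>S. dual x \<in> S \<and> dual (dual x) = x) \<and>
     (\<forall>x\<in>S. \<forall>z\<in>S. N one x z = (if z = x then 1 else 0) \<and> N x one z = (if z = x then 1 else 0)) \<and>
     (\<forall>x\<in>S. \<forall>y\<in>S. \<forall>z\<in>S. \<forall>w\<in>S.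
         (\<Sum>u\<in>S. N x y u * N u z w) = (\<Sum>v\<in>S. N y z v * N x v w)) \<and>
     (\<forall>x\<in>S. \<forall>y\<in>S. N x y one = (if y = dual x then 1 else 0)) \<and>
     (\<forall>x\<in>S. \<forall>y\<in>S. \<forall>z\<in>S. N x y (dual z) = N y z (dual x))"

text \<open>Real eigenvalues of the matrix of left multiplication by x (entry (Z,Y) = N x Y Z).\<close>
definition fusion_eigenvalue :: "'a set \<Rightarrow> ('a \<Rightarrow> 'a \<Rightarrow> 'a \<Rightarrow> nat) \<Rightarrow> 'a \<Rightarrow> real \<Rightarrow> bool" where
  "fusion_eigenvalue S N x r \<longleftrightarrow>
     (\<exists>v :: 'a \<Rightarrow> real. (\<exists>y\<in>S. v y \<noteq> 0) \<and>
        (\<forall>z\<in>S. (\<Sum>y\<in>S. real (N x y z) * v y) = r * v z))"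

definition FPdim :: "'a set \<Rightarrow> ('a \<Rightarrow> 'a \<Rightarrow> 'a \<Rightarrow> nat) \<Rightarrow> 'a \<Rightarrow> real" where
  "FPdim S N x = Max {r. r \<ge> 0 \<and> fusion_eigenvalue S N x r}"

definition Irr :: "'a set \<Rightarrow> ('a \<Rightarrow> 'a \<Rightarrow> 'a \<Rightarrow> nat) \<Rightarrow> real \<Rightarrow> 'a set" where
  "Irr S N \<alpha> = {x \<in> S. FPdim S N x = \<alpha>}"

text \<open>x \<otimes> y \<cong> z for simple z: the tensor product decomposes as exactly one copy of z.\<close>
definition tensor_iso :: "'a set \<Rightarrow> ('a \<Rightarrow> 'a \<Rightarrow> 'a \<Rightarrow> nat) \<Rightarrow> 'a \<Rightarrow> 'a \<Rightarrow> 'a \<Rightarrow> bool" where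
  "tensor_iso S N x y z \<longleftrightarrow> (\<forall>w\<in>S. N x y w = (if w = z then 1 else 0))"

definition Ginv :: "'a set \<Rightarrow> 'a \<Rightarrow> ('a \<Rightarrow> 'a \<Rightarrow> 'a \<Rightarrow> nat) \<Rightarrow> ('a \<Rightarrow> 'a) \<Rightarrow> 'a set" where
  "Ginv S one N dual = {g \<in> S. tensor_iso S N g (dual g) one}"

definition stab :: "'a set \<Rightarrow> 'a \<Rightarrow> ('a \<Rightarrow> 'a \<Rightarrow> 'a \<Rightarrow> nat) \<Rightarrow> ('a \<Rightarrow> 'a) \<Rightarrow> 'a \<Rightarrow> 'a set" where
  "stab S one N dual X = {g \<in> Ginv S one N dual. tensor_iso S N g X X}"

end

theory Submission
  imports Defs "Jordan_Normal_Form.Char_Poly" "HOL-Analysis.Function_Topology" "HOL-Analysis.Abstract_Limits" "HOL-Algebra.Group_Action"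
begin


locale fr =
  fixes S :: "'a set" and one :: 'a and N :: "'a \<Rightarrow> 'a \<Rightarrow> 'a \<Rightarrow> nat" and dual :: "'a \<Rightarrow> 'a"
  assumes FR: "fusion_ring S one N dual"
begin

lemma fin: "finite S" and one_in: "one \<in> S"
  and dual_in: "x \<in> S \<Longrightarrow> dual x \<in> S" and dual_dual: "x \<in> S \<Longrightarrow> dual (dual x) = x"
  and unitL: "x \<in> S \<Longrightarrow> z \<in> S \<Longrightarrow> N one x z = (if z = x then 1 else 0)"
  and unitR: "x \<in> S \<Longrightarrow> z \<in> S \<Longrightarrow> N x one z = (if z = x then 1 else 0)"
  and assoc: "x \<in> S \<Longrightarrow> y \<in> S \<Longrightarrow> z \<in> S \<Longrightarrow> w \<in> S \<Longrightarrow>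
      (\<Sum>u\<in>S. N x y u * N u z w) = (\<Sum>v\<in>S. N y z v * N x v w)"
  and Nunit: "x \<in> S \<Longrightarrow> y \<in> S \<Longrightarrow> N x y one = (if y = dual x then 1 else 0)"
  using FR unfolding fusion_ring_def by auto

lemma sum_delta_left: assumes "x \<in> S" shows "(\<Sum>u\<in>S. (if u = x then 1 else 0) * (f u :: nat)) = f x"
proof -
  have "(\<Sum>u\<in>S. (if u = x then 1 else 0) * (f u :: nat)) = (\<Sum>u\<in>S. if u = x then f u else 0)"
    by (rule sum.cong) auto
  then show ?thesis using fin assms by simp
qed

lemma nz: assumes a: "a \<in> S" and b: "b \<in> S" shows "\<exists>v\<in>S. N a b v > 0"
proof (rule ccontr)
  assume "\<not> ?thesis"
  then have z: "\<forall>v\<in>S. N a b v = 0" by auto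
  have "(\<Sum>u\<in>S. N (dual a) a u * N u b b) = (\<Sum>v\<in>S. N a b v * N (dual a) v b)"
    using assoc[OF dual_in[OF a] a b b] .
  also have "\<dots> = 0" using z by simp
  finally have "N (dual a) a one * N one b b = 0"
    using fin one_in by (simp add: sum_eq_0_iff)
  moreover have "N (dual a) a one = 1" using Nunit[OF dual_in[OF a] a] dual_dual[OF a] by simp
  moreover have "N one b b = 1" using unitL[OF b b] by simp
  ultimately show False by simp
qed

lemma Mpos: assumes y: "y \<in> S" and z: "z \<in> S" shows "\<exists>v\<in>S. N y v z > 0"
proof (rule ccontr)
  assume "\<not> ?thesis"
  then have zz: "\<forall>v\<in>S. N y v z = 0" by auto
  have "(\<Sum>u\<in>S. N y (dual y) u * N u z z) = (\<Sum>v\<in>S. N (dual y) z v * N y v z)"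
    using assoc[OF y dual_in[OF y] z z] .
  also have "\<dots> = 0" using zz by simp
  finally have "N y (dual y) one * N one z z = 0"
    using fin one_in by (simp add: sum_eq_0_iff)
  moreover have "N y (dual y) one = 1" using Nunit[OF y dual_in[OF y]] by simp
  moreover have "N one z z = 1" using unitL[OF z z] by simp
  ultimately show False by simp
qed

lemma Ginv_iff: "g \<in> Ginv S one N dual \<longleftrightarrow> g \<in> S \<and> (\<forall>w\<in>S. N g (dual g) w = (if w = one then 1 else 0))"
  unfolding Ginv_def tensor_iso_def by auto

lemma inv_right:
  assumes x: "x \<in> S" and y: "y \<in> S" and xy: "\<forall>w\<in>S. N x y w = (if w = one then 1 else 0)"
  shows "y = dual x" and "\<forall>w\<in>S. N y x w = (if w = one then 1 else 0)"
proof -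
  show yd: "y = dual x" using xy Nunit[OF x y] one_in by (metis one_neq_zero)
  show "\<forall>w\<in>S. N y x w = (if w = one then 1 else 0)"
  proof
    fix w assume w: "w \<in> S"
    have E: "(\<Sum>v\<in>S. N y x v * N x v w') = (if w' = x then 1 else 0)" if w': "w' \<in> S" for w'
    proof -
      have "(\<Sum>v\<in>S. N y x v * N x v w') = (\<Sum>u\<in>S. N x y u * N u x w')"
        using assoc[OF x y x w'] by simp
      also have "\<dots> = (\<Sum>u\<in>S. (if u = one then 1 else 0) * N u x w')"
        using xy by (intro sum.cong) auto
      also have "\<dots> = N one x w'" using sum_delta_left[OF one_in] .
      also have "\<dots> = (if w' = x then 1 else 0)" using unitL[OF x w'] .
      finally show ?thesis .
    qed
    have yx1: "N y x one = 1" using Nunit[OF y x] yd dual_dual[OF x] by simp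
    have others: "N y x v = 0" if v: "v \<in> S" "v \<noteq> one" for v
    proof (rule ccontr)
      assume ne: "N y x v \<noteq> 0"
      obtain w' where w': "w' \<in> S" "N x v w' > 0" using nz[OF x v(1)] by auto
      have "(\<Sum>v\<in>S. N y x v * N x v w') = N y x one * N x one w' + (\<Sum>v\<in>S - {one}. N y x v * N x v w')"
        using fin one_in by (simp add: sum.remove)
      moreover have "(\<Sum>v\<in>S - {one}. N y x v * N x v w') \<ge> N y x v * N x v w'"
        using fin v by (intro member_le_sum) auto
      moreover have "N y x v * N x v w' > 0" using ne w' by simp
      moreover have "N y x one * N x one w' = (if w' = x then 1 else 0)"
        using yx1 unitR[OF x w'(1)] by simp
      ultimately show False using E[OF w'(1)] by (simp split: if_splits)
    qed
    show "N y x w = (if w = one then 1 else 0)"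
      using yx1 others w by auto
  qed
qed

lemma dual_one: "dual one = one"
  using Nunit[OF one_in one_in] unitL[OF one_in one_in] by (metis one_neq_zero)

lemma one_G: "one \<in> Ginv S one N dual"
  unfolding Ginv_iff using one_in dual_one unitL[OF one_in] by auto

lemma G_S: "g \<in> Ginv S one N dual \<Longrightarrow> g \<in> S" by (simp add: Ginv_iff)

lemma inv_left: assumes g: "g \<in> Ginv S one N dual"
  shows "\<forall>w\<in>S. N (dual g) g w = (if w = one then 1 else 0)"
  using inv_right(2)[of g "dual g"] g dual_in by (auto simp: Ginv_iff)

lemma dual_G: assumes g: "g \<in> Ginv S one N dual" shows "dual g \<in> Ginv S one N dual"
  using inv_left[OF g] g dual_in dual_dual by (auto simp: Ginv_iff)

lemma left_inv_G: assumes x: "x \<in> S" and y: "y \<in> S"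
  and yx: "\<forall>w\<in>S. N y x w = (if w = one then 1 else 0)"
  shows "x \<in> Ginv S one N dual"
proof -
  have "x = dual y" using inv_right(1)[OF y x yx] .
  then have "dual x = y" using dual_dual[OF y] by simp
  then show ?thesis using inv_right(2)[OF y x yx] x by (simp add: Ginv_iff)
qed

lemma act_ex:
  assumes g: "g \<in> Ginv S one N dual" and x: "x \<in> S"
  shows "\<exists>v\<in>S. \<forall>w\<in>S. N g x w = (if w = v then 1 else 0)"
proof -
  have gS: "g \<in> S" using g by (simp add: Ginv_iff)
  have dg: "dual g \<in> S" using dual_in[OF gS] .
  have E: "(\<Sum>v\<in>S. N g x v * N (dual g) v w) = (if w = x then 1 else 0)" if w: "w \<in> S" for w
  proof -
    have "(\<Sum>v\<in>S. N g x v * N (dual g) v w) = (\<Sum>u\<in>S. N (dual g) g u * N u x w)"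
      using assoc[OF dg gS x w] by simp
    also have "\<dots> = (\<Sum>u\<in>S. (if u = one then 1 else 0) * N u x w)"
      using inv_left[OF g] by (intro sum.cong) auto
    also have "\<dots> = N one x w" using sum_delta_left[OF one_in] .
    also have "\<dots> = (if w = x then 1 else 0)" using unitL[OF x w] .
    finally show ?thesis .
  qed
  have C: "N (dual g) v x > 0" if v: "v \<in> S" "N g x v > 0" for v
  proof -
    obtain w where w: "w \<in> S" "N (dual g) v w > 0" using nz[OF dg v(1)] by auto
    have "N g x v * N (dual g) v w \<le> (\<Sum>v\<in>S. N g x v * N (dual g) v w)"
      using fin v by (intro member_le_sum) auto
    moreover have "N g x v * N (dual g) v w > 0" using v w by simp
    ultimately have "w = x" using E[OF w(1)] by (simp split: if_splits)
    then show ?thesis using w by simp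
  qed
  obtain v0 where v0: "v0 \<in> S" "N g x v0 > 0" using nz[OF gS x] by auto
  have sum1: "(\<Sum>v\<in>S. N g x v * N (dual g) v x) = 1" using E[OF x] by simp
  have split: "(\<Sum>v\<in>S. N g x v * N (dual g) v x) = N g x v0 * N (dual g) v0 x + (\<Sum>v\<in>S - {v0}. N g x v * N (dual g) v x)"
    using fin v0 by (simp add: sum.remove)
  have t0: "N g x v0 * N (dual g) v0 x > 0" using v0 C[OF v0] by simp
  have rest: "(\<Sum>v\<in>S - {v0}. N g x v * N (dual g) v x) = 0" and t1: "N g x v0 * N (dual g) v0 x = 1"
    using sum1 split t0 by linarith+
  have nv0: "N g x v0 = 1" using t1 by simp
  have other: "N g x v = 0" if v: "v \<in> S" "v \<noteq> v0" for v
  proof (rule ccontr)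
    assume "N g x v \<noteq> 0"
    then have pos: "N g x v * N (dual g) v x > 0" using C[OF v(1)] by simp
    have "N g x v * N (dual g) v x \<le> (\<Sum>v\<in>S - {v0}. N g x v * N (dual g) v x)"
      using fin v by (intro member_le_sum) auto
    then show False using pos rest by simp
  qed
  show ?thesis using v0 nv0 other by (intro bexI[of _ v0]) auto
qed

definition act :: "'a \<Rightarrow> 'a \<Rightarrow> 'a" where
  "act g x = (THE v. v \<in> S \<and> (\<forall>w\<in>S. N g x w = (if w = v then 1 else 0)))"

lemma act:
  assumes g: "g \<in> Ginv S one N dual" and x: "x \<in> S"
  shows "act g x \<in> S" and "\<forall>w\<in>S. N g x w = (if w = act g x then 1 else 0)"
proof -
  obtain v where v: "v\<in>S" "\<forall>w\<in>S. N g x w = (if w = v then 1 else 0)" using act_ex[OF g x] by auto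
  have "act g x = v" unfolding act_def
  proof (rule the_equality)
    show "v \<in> S \<and> (\<forall>w\<in>S. N g x w = (if w = v then 1 else 0))" using v by simp
  next
    fix v' assume "v' \<in> S \<and> (\<forall>w\<in>S. N g x w = (if w = v' then 1 else 0))"
    then show "v' = v" using v by (metis one_neq_zero)
  qed
  then show "act g x \<in> S" "\<forall>w\<in>S. N g x w = (if w = act g x then 1 else 0)" using v by auto
qed

lemma act_unique:
  assumes g: "g \<in> Ginv S one N dual" and x: "x \<in> S" and v: "v \<in> S"
   and h: "\<forall>w\<in>S. N g x w = (if w = v then 1 else 0)"
  shows "act g x = v"
  using act[OF g x] h v by (metis one_neq_zero)

lemma N_act_left:
  assumes g: "g \<in> Ginv S one N dual" and x: "x \<in> S" and y: "y \<in> S" and z: "z \<in> S"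
  shows "N (act g x) y z = (\<Sum>v\<in>S. N x y v * N g v z)"
proof -
  have "(\<Sum>v\<in>S. N x y v * N g v z) = (\<Sum>u\<in>S. N g x u * N u y z)"
    using assoc[OF G_S[OF g] x y z] by simp
  also have "\<dots> = (\<Sum>u\<in>S. (if u = act g x then 1 else 0) * N u y z)"
    using act(2)[OF g x] by (intro sum.cong) auto
  also have "\<dots> = N (act g x) y z" using sum_delta_left[OF act(1)[OF g x]] .
  finally show ?thesis by simp
qed

lemma N_act_mid:
  assumes g: "g \<in> Ginv S one N dual" and h: "h \<in> Ginv S one N dual" and x: "x \<in> S" and w: "w \<in> S"
  shows "N (act g h) x w = N g (act h x) w"
proof -
  have "N (act g h) x w = (\<Sum>v\<in>S. N h x v * N g v w)" using N_act_left[OF g G_S[OF h] x w] .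
  also have "\<dots> = (\<Sum>v\<in>S. (if v = act h x then 1 else 0) * N g v w)"
    using act(2)[OF h x] by (intro sum.cong) auto
  also have "\<dots> = N g (act h x) w" using sum_delta_left[OF act(1)[OF h x]] .
  finally show ?thesis .
qed

lemma act_one: "x \<in> S \<Longrightarrow> act one x = x"
  using act_unique[OF one_G] unitL by auto

lemma act_inv: "g \<in> Ginv S one N dual \<Longrightarrow> act (dual g) g = one"
  using act_unique[OF dual_G] inv_left G_S one_in by auto

lemma act_closed:
  assumes g: "g \<in> Ginv S one N dual" and h: "h \<in> Ginv S one N dual"
  shows "act g h \<in> Ginv S one N dual"
proof -
  let ?k = "act g h"
  have kS: "?k \<in> S" using act(1)[OF g G_S[OF h]] .
  have ginvk: "act (dual g) ?k = h"
  proof (rule act_unique[OF dual_G[OF g] kS G_S[OF h]], intro ballI)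
    fix w assume w: "w \<in> S"
    have "N (dual g) ?k w = N (act (dual g) g) h w"
      using N_act_mid[OF dual_G[OF g] g G_S[OF h] w] by simp
    also have "\<dots> = N one h w" using act_inv[OF g] by simp
    finally show "N (dual g) ?k w = (if w = h then 1 else 0)" using unitL[OF G_S[OF h] w] by simp
  qed
  let ?y = "act (dual h) (dual g)"
  have yS: "?y \<in> S" using act(1)[OF dual_G[OF h] G_S[OF dual_G[OF g]]] .
  have "\<forall>w\<in>S. N ?y ?k w = (if w = one then 1 else 0)"
  proof
    fix w assume w: "w \<in> S"
    have "N ?y ?k w = N (dual h) (act (dual g) ?k) w"
      using N_act_mid[OF dual_G[OF h] dual_G[OF g] kS w] .
    also have "\<dots> = N (dual h) h w" using ginvk by simp
    finally show "N ?y ?k w = (if w = one then 1 else 0)" using inv_left[OF h] w by simp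
  qed
  then show ?thesis using left_inv_G[OF kS yS] by simp
qed

lemma act_comp:
  assumes g: "g \<in> Ginv S one N dual" and h: "h \<in> Ginv S one N dual" and x: "x \<in> S"
  shows "act (act g h) x = act g (act h x)"
proof (rule act_unique[OF act_closed[OF g h] x act(1)[OF g act(1)[OF h x]]], intro ballI)
  fix w assume w: "w \<in> S"
  have "N (act g h) x w = N g (act h x) w" using N_act_mid[OF g h x w] .
  then show "N (act g h) x w = (if w = act g (act h x) then 1 else 0)"
    using act(2)[OF g act(1)[OF h x]] w by simp
qed

lemma act_inv_x: "g \<in> Ginv S one N dual \<Longrightarrow> x \<in> S \<Longrightarrow> act (dual g) (act g x) = x"
  using act_comp[OF dual_G, of g g x] act_inv act_one by simp

lemma act_iso: "g \<in> Ginv S one N dual \<Longrightarrow> x \<in> S \<Longrightarrow> tensor_iso S N g x y \<Longrightarrow> y \<in> S \<Longrightarrow> act g x = y"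
  unfolding tensor_iso_def by (rule act_unique)

lemma iso_act: "g \<in> Ginv S one N dual \<Longrightarrow> x \<in> S \<Longrightarrow> tensor_iso S N g x (act g x)"
  unfolding tensor_iso_def using act(2) by blast

end



lemma continuous_map_Min_fin:
  assumes "finite A" "A \<noteq> {}" "\<And>a. a \<in> A \<Longrightarrow> continuous_map X euclideanreal (f a)"
  shows "continuous_map X euclideanreal (\<lambda>x. Min ((\<lambda>a. f a x) ` A))"
  using assms
proof (induction A rule: finite_ne_induct)
  case (singleton a) then show ?case by simp
next
  case (insert a A)
  have "(\<lambda>x. Min ((\<lambda>b. f b x) ` insert a A)) = (\<lambda>x. min (f a x) (Min ((\<lambda>b. f b x) ` A)))"
    using insert by (auto simp: Min_insert)
  then show ?case using insert by (auto intro!: continuous_map_real_min)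
qed

lemma pf_unique:
  fixes M :: "'a \<Rightarrow> 'a \<Rightarrow> real"
  assumes fin: "finite S" and ne: "S \<noteq> {}" and pos: "\<And>z y. z \<in> S \<Longrightarrow> y \<in> S \<Longrightarrow> M z y > 0"
   and dpos: "\<forall>z\<in>S. d z > 0" and deig: "\<forall>z\<in>S. (\<Sum>y\<in>S. M z y * d y) = \<rho> * d z"
   and wnn: "\<forall>z\<in>S. w z \<ge> 0" and weig: "\<forall>z\<in>S. (\<Sum>y\<in>S. M z y * w y) = \<rho> * w z"
  shows "\<exists>t\<ge>0. \<forall>z\<in>S. w z = t * d z"
proof -
  define t where "t = Min ((\<lambda>z. w z / d z) ` S)"
  have "t \<in> (\<lambda>z. w z / d z) ` S" unfolding t_def using fin ne by (intro Min_in) auto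
  then obtain z0 where z0: "z0 \<in> S" "t = w z0 / d z0" by auto
  have tle: "t \<le> w z / d z" if "z \<in> S" for z unfolding t_def using fin that by (intro Min_le) auto
  have t0: "t \<ge> 0" using z0 wnn dpos by auto
  define u where "u z = w z - t * d z" for z
  have unn: "u z \<ge> 0" if "z \<in> S" for z
    using tle[OF that] dpos that by (auto simp: u_def pos_le_divide_eq mult.commute)
  have u0: "u z0 = 0" using z0 dpos by (auto simp: u_def)
  have "(\<Sum>y\<in>S. M z0 y * u y) = (\<Sum>y\<in>S. M z0 y * w y) - t * (\<Sum>y\<in>S. M z0 y * d y)"
    by (simp add: u_def algebra_simps sum_subtractf sum_distrib_left)
  also have "\<dots> = \<rho> * u z0" using deig weig z0 by (simp add: u_def algebra_simps)
  finally have "(\<Sum>y\<in>S. M z0 y * u y) = 0" using u0 by simp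
  then have "\<forall>y\<in>S. M z0 y * u y = 0"
    using fin unn pos z0 by (subst sum_nonneg_eq_0_iff[symmetric]) (auto, meson less_imp_le mult_nonneg_nonneg)
  then have "\<forall>y\<in>S. u y = 0" using pos z0 by (metis less_irrefl mult_eq_0_iff)
  then show ?thesis using t0 by (auto simp: u_def intro!: exI[of _ t])
qed

lemma pf_exists:
  fixes M :: "'a \<Rightarrow> 'a \<Rightarrow> real"
  assumes fin: "finite S" and ne: "S \<noteq> {}" and pos: "\<And>z y. z \<in> S \<Longrightarrow> y \<in> S \<Longrightarrow> M z y > 0"
  shows "\<exists>d \<rho>. (\<forall>z\<in>S. d z > 0) \<and> (\<forall>z\<in>S. (\<Sum>y\<in>S. M z y * d y) = \<rho> * d z)"
proof -
  define X where "X = product_topology (\<lambda>_::'a. euclideanreal) S"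
  define D where "D = {u \<in> PiE S (\<lambda>_. {0..1::real}). sum u S = 1}"
  define A where "A u = (\<lambda>z. \<Sum>y\<in>S. M z y * u y)" for u :: "'a \<Rightarrow> real"
  define h where "h u = Min ((\<lambda>z. A (A u) z / A u z) ` S)" for u
  have Apos: "A u z > 0" if as: "z \<in> S" "\<forall>y\<in>S. u y \<ge> 0" "\<exists>y\<in>S. u y > 0" for u z
  proof -
    obtain y where y: "y\<in>S" "u y > 0" using as by auto
    have "M z y * u y > 0" using pos[OF as(1) y(1)] y by simp
    also have "M z y * u y \<le> A u z" unfolding A_def
      using fin y as by (intro member_le_sum) (auto intro!: mult_nonneg_nonneg less_imp_le[OF pos])
    finally show ?thesis .
  qed
  have Dpos: "(\<forall>y\<in>S. u y \<ge> 0) \<and> (\<exists>y\<in>S. u y > 0)" if "u \<in> D" for u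
  proof -
    have nn: "\<forall>y\<in>S. u y \<ge> 0" using that by (auto simp: D_def PiE_def Pi_def)
    moreover have "\<exists>y\<in>S. u y > 0"
    proof (rule ccontr)
      assume "\<not> ?thesis"
      then have "\<forall>y\<in>S. u y = 0" using nn by force
      then have "sum u S = 0" by simp
      then show False using that by (simp add: D_def)
    qed
    ultimately show ?thesis by blast
  qed
  have cproj: "continuous_map X euclideanreal (\<lambda>u. u y)" if "y \<in> S" for y
    unfolding X_def using continuous_map_product_projection[OF that, of "\<lambda>_. euclideanreal"] by simp
  have cA: "continuous_map X euclideanreal (\<lambda>u. A u z)" for z
    unfolding A_def using fin by (intro continuous_map_sum continuous_map_real_mult_left cproj) auto
  have cAA: "continuous_map X euclideanreal (\<lambda>u. A (A u) z)" for z
    unfolding A_def[of "A _"] using fin by (intro continuous_map_sum continuous_map_real_mult_left cA) auto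
  define Y where "Y = subtopology X D"
  have tsY: "topspace Y \<subseteq> D" unfolding Y_def by simp
  have ch: "continuous_map Y euclideanreal h"
    unfolding h_def
  proof (rule continuous_map_Min_fin[OF fin ne])
    fix z assume z: "z \<in> S"
    show "continuous_map Y euclideanreal (\<lambda>u. A (A u) z / A u z)"
      unfolding Y_def
    proof (intro continuous_map_real_divide continuous_map_from_subtopology cA cAA)
      fix u assume "u \<in> topspace (subtopology X D)"
      then have "u \<in> D" by simp
      then show "A u z \<noteq> 0" using Apos[OF z] Dpos by force
    qed
  qed
  have tsX: "topspace X = PiE S (\<lambda>_. UNIV)" unfolding X_def by simp
  have cK: "compactin X (PiE S (\<lambda>_. {0..1::real}))"
    unfolding X_def by (subst compactin_PiE) auto
  have csum: "continuous_map X euclideanreal (\<lambda>u. sum u S)"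
    using fin by (intro continuous_map_sum cproj) auto
  have cl: "closedin X {u \<in> topspace X. sum u S \<in> {1}}"
    by (rule closedin_continuous_map_preimage[OF csum]) (simp add: closed_closedin[symmetric])
  have Deq: "D = PiE S (\<lambda>_. {0..1::real}) \<inter> {u \<in> topspace X. sum u S \<in> {1}}"
    unfolding D_def tsX by (auto simp: PiE_def Pi_def)
  have cD: "compactin X D" unfolding Deq by (rule compact_Int_closedin[OF cK cl])
  have DsubX: "D \<subseteq> topspace X" unfolding Deq by auto
  have cDY: "compactin Y D" unfolding Y_def by (simp add: compactin_subtopology cD)
  have "compactin euclideanreal (h ` D)" by (rule image_compactin[OF cDY ch])
  then have cptD: "compact (h ` D)" by simp
  obtain z0 where z0: "z0 \<in> S" using ne by auto
  define e0 where "e0 = restrict (\<lambda>y. if y = z0 then 1 else (0::real)) S"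
  have "e0 \<in> D" unfolding D_def e0_def using fin z0 by (auto simp: PiE_def Pi_def)
  then have "h ` D \<noteq> {}" by auto
  from compact_attains_sup[OF cptD this] obtain u0 where u0: "u0 \<in> D" and u0max: "\<forall>u\<in>D. h u \<le> h u0"
    by auto
  define \<rho> where "\<rho> = h u0"
  define w where "w = A u0"
  have wpos: "\<forall>z\<in>S. w z > 0" unfolding w_def using Apos Dpos[OF u0] by blast
  have hle: "\<rho> \<le> A w z / w z" if "z \<in> S" for z
    unfolding \<rho>_def h_def w_def using fin that by (intro Min_le) auto
  have ge: "A w z \<ge> \<rho> * w z" if "z \<in> S" for z
    using hle[OF that] wpos that by (simp add: pos_le_divide_eq)
  have eq: "\<forall>z\<in>S. A w z = \<rho> * w z"
  proof (rule ccontr)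
    assume "\<not> ?thesis"
    then obtain z1 where z1: "z1 \<in> S" "A w z1 \<noteq> \<rho> * w z1" by auto
    define y' where "y' z = A w z - \<rho> * w z" for z
    have y'nn: "\<forall>z\<in>S. y' z \<ge> 0" using ge by (simp add: y'_def)
    have y'1: "y' z1 > 0" using ge[OF z1(1)] z1(2) by (simp add: y'_def)
    have Ay': "A y' z = A (A w) z - \<rho> * A w z" for z
      unfolding A_def y'_def by (simp add: algebra_simps sum_subtractf sum_distrib_left)
    have strict: "A (A w) z > \<rho> * A w z" if "z \<in> S" for z
      using Apos[OF that y'nn] y'1 z1(1) Ay' by force
    define s where "s = sum w S"
    have wle: "w z \<le> s" if "z \<in> S" for z
      unfolding s_def using fin that wpos by (intro member_le_sum) auto
    have spos: "s > 0" using wle[OF z0] wpos z0 by force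
    define u1 where "u1 = restrict (\<lambda>z. w z / s) S"
    have "u1 \<in> D" unfolding D_def u1_def using wle wpos spos
      by (auto simp: PiE_def Pi_def s_def sum_divide_distrib[symmetric] less_imp_le)
    then have hu1: "h u1 \<le> \<rho>" using u0max by (simp add: \<rho>_def)
    have Au1: "A u1 z = A w z / s" for z
      unfolding A_def u1_def by (simp add: sum_divide_distrib)
    have AAu1: "A (A u1) z = A (A w) z / s" for z
      unfolding A_def[of "A u1"] A_def[of "A w"] Au1 by (simp add: sum_divide_distrib)
    have Awpos: "\<forall>z\<in>S. A w z > 0" using Apos wpos by (meson less_imp_le)
    have "h u1 = Min ((\<lambda>z. A (A w) z / A w z) ` S)"
      unfolding h_def Au1 AAu1 using spos by simp
    moreover have "\<rho> < Min ((\<lambda>z. A (A w) z / A w z) ` S)"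
      using fin ne strict Awpos
      by (subst Min_gr_iff) (auto simp: pos_less_divide_eq)
    ultimately show False using hu1 by simp
  qed
  show ?thesis using wpos eq unfolding A_def by blast
qed



lemma eig_finite:
  fixes A :: "'a \<Rightarrow> 'a \<Rightarrow> real"
  assumes fin: "finite S"
  shows "finite {r. \<exists>v. (\<exists>y\<in>S. v y \<noteq> 0) \<and> (\<forall>z\<in>S. (\<Sum>y\<in>S. A z y * v y) = r * v z)}"
proof -
  define n where "n = card S"
  obtain f where f: "bij_betw f {0..<n} S" using ex_bij_betw_nat_finite[OF fin] n_def by auto
  define B where "B = mat n n (\<lambda>(i,j). A (f i) (f j))"
  have B: "B \<in> carrier_mat n n" by (simp add: B_def)
  have sub: "{r. \<exists>v. (\<exists>y\<in>S. v y \<noteq> 0) \<and> (\<forall>z\<in>S. (\<Sum>y\<in>S. A z y * v y) = r * v z)}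
      \<subseteq> {r. poly (char_poly B) r = 0}"
  proof safe
    fix r v y assume y: "y \<in> S" "v y \<noteq> 0" and ev: "\<forall>z\<in>S. (\<Sum>y\<in>S. A z y * v y) = r * v z"
    define u where "u = vec n (\<lambda>i. v (f i))"
    have "eigenvector B u r"
      unfolding eigenvector_def
    proof (intro conjI)
      show "u \<in> carrier_vec (dim_row B)" using B by (simp add: u_def)
      obtain i where i: "i < n" "f i = y" using f y unfolding bij_betw_def by force
      show "u \<noteq> 0\<^sub>v (dim_row B)"
      proof
        assume "u = 0\<^sub>v (dim_row B)"
        then have "u $ i = 0" using i B by simp
        then show False using i y by (simp add: u_def)
      qed
      show "B *\<^sub>v u = r \<cdot>\<^sub>v u"
      proof (rule eq_vecI)
        fix i assume i: "i < dim_vec (r \<cdot>\<^sub>v u)"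
        then have i': "i < n" by (simp add: u_def)
        have fi: "f i \<in> S" using f i' by (auto simp: bij_betw_def)
        have "(B *\<^sub>v u) $ i = (\<Sum>j = 0..<n. A (f i) (f j) * v (f j))"
          using i' by (simp add: B_def u_def scalar_prod_def)
        also have "\<dots> = (\<Sum>y\<in>S. A (f i) y * v y)"
          using sum.reindex_bij_betw[OF f, of "\<lambda>y. A (f i) y * v y"] by simp
        also have "\<dots> = r * v (f i)" using ev fi by auto
        finally show "(B *\<^sub>v u) $ i = (r \<cdot>\<^sub>v u) $ i" using i' by (simp add: u_def)
      qed (simp add: B_def u_def)
    qed
    then have "eigenvalue B r" unfolding eigenvalue_def by blast
    then show "poly (char_poly B) r = 0" using eigenvalue_root_char_poly[OF B] by simp
  qed
  have "char_poly B \<noteq> 0" using degree_monic_char_poly[OF B] by auto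
  then show ?thesis using poly_roots_finite finite_subset[OF sub] by blast
qed

context fr
begin

definition Mr :: "'a \<Rightarrow> 'a \<Rightarrow> real" where "Mr z y = real (\<Sum>w\<in>S. N y w z)"
definition Lop :: "'a \<Rightarrow> ('a \<Rightarrow> real) \<Rightarrow> 'a \<Rightarrow> real" where
  "Lop x v z = (\<Sum>y\<in>S. real (N x y z) * v y)"

lemma S_ne: "S \<noteq> {}" using one_in by auto

lemma Mr_pos: assumes "z \<in> S" "y \<in> S" shows "Mr z y > 0"
proof -
  obtain v where v: "v \<in> S" "N y v z > 0" using Mpos[OF assms(2,1)] by auto
  have "0 < (\<Sum>w\<in>S. N y w z)" using fin v by (intro sum_pos2[of S v]) auto
  then show ?thesis unfolding Mr_def by (metis of_nat_0_less_iff)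
qed

lemma comm_nat:
  assumes x: "x \<in> S" and y': "y' \<in> S" and z: "z \<in> S"
  shows "(\<Sum>y\<in>S. (\<Sum>w\<in>S. N y w z) * N x y' y) = (\<Sum>y\<in>S. N x y z * (\<Sum>w\<in>S. N y' w y))"
proof -
  have "(\<Sum>y\<in>S. (\<Sum>w\<in>S. N y w z) * N x y' y) = (\<Sum>y\<in>S. \<Sum>w\<in>S. N y w z * N x y' y)"
    by (simp add: sum_distrib_right)
  also have "\<dots> = (\<Sum>w\<in>S. \<Sum>y\<in>S. N y w z * N x y' y)" by (rule sum.swap)
  also have "\<dots> = (\<Sum>w\<in>S. \<Sum>v\<in>S. N y' w v * N x v z)"
  proof (rule sum.cong[OF refl])
    fix w assume w: "w \<in> S"
    have "(\<Sum>y\<in>S. N y w z * N x y' y) = (\<Sum>y\<in>S. N x y' y * N y w z)" by (simp add: mult.commute)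
    also have "\<dots> = (\<Sum>v\<in>S. N y' w v * N x v z)" using assoc[OF x y' w z] .
    finally show "(\<Sum>y\<in>S. N y w z * N x y' y) = (\<Sum>v\<in>S. N y' w v * N x v z)" .
  qed
  also have "\<dots> = (\<Sum>v\<in>S. \<Sum>w\<in>S. N y' w v * N x v z)" by (rule sum.swap)
  also have "\<dots> = (\<Sum>v\<in>S. \<Sum>w\<in>S. N x v z * N y' w v)" by (simp add: mult.commute)
  also have "\<dots> = (\<Sum>y\<in>S. N x y z * (\<Sum>w\<in>S. N y' w y))"
    by (simp add: sum_distrib_left)
  finally show ?thesis .
qed

lemma comm:
  assumes x: "x \<in> S" and z: "z \<in> S"
  shows "(\<Sum>y\<in>S. Mr z y * Lop x v y) = Lop x (\<lambda>y. \<Sum>y'\<in>S. Mr y y' * v y') z"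
proof -
  have inner: "(\<Sum>y\<in>S. Mr z y * real (N x y' y)) = (\<Sum>y\<in>S. real (N x y z) * Mr y y')" if y': "y' \<in> S" for y'
  proof -
    have "real (\<Sum>y\<in>S. (\<Sum>w\<in>S. N y w z) * N x y' y) = real (\<Sum>y\<in>S. N x y z * (\<Sum>w\<in>S. N y' w y))"
      using comm_nat[OF x y' z] by simp
    then show ?thesis unfolding Mr_def by (simp only: of_nat_sum of_nat_mult)
  qed
  have "(\<Sum>y\<in>S. Mr z y * Lop x v y) = (\<Sum>y\<in>S. \<Sum>y'\<in>S. Mr z y * real (N x y' y) * v y')"
    unfolding Lop_def by (simp add: sum_distrib_left mult.assoc)
  also have "\<dots> = (\<Sum>y'\<in>S. \<Sum>y\<in>S. Mr z y * real (N x y' y) * v y')" by (rule sum.swap)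
  also have "\<dots> = (\<Sum>y'\<in>S. (\<Sum>y\<in>S. Mr z y * real (N x y' y)) * v y')" by (simp add: sum_distrib_right)
  also have "\<dots> = (\<Sum>y'\<in>S. (\<Sum>y\<in>S. real (N x y z) * Mr y y') * v y')" using inner by simp
  also have "\<dots> = (\<Sum>y'\<in>S. \<Sum>y\<in>S. real (N x y z) * (Mr y y' * v y'))" by (simp add: sum_distrib_right mult.assoc)
  also have "\<dots> = (\<Sum>y\<in>S. \<Sum>y'\<in>S. real (N x y z) * (Mr y y' * v y'))" by (rule sum.swap)
  also have "\<dots> = Lop x (\<lambda>y. \<Sum>y'\<in>S. Mr y y' * v y') z" unfolding Lop_def by (simp add: sum_distrib_left)
  finally show ?thesis .
qed

definition dd :: "'a \<Rightarrow> real" where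
  "dd = (SOME d. (\<forall>z\<in>S. d z > 0) \<and> (\<exists>\<rho>. \<forall>z\<in>S. (\<Sum>y\<in>S. Mr z y * d y) = \<rho> * d z))"

lemma dd: "\<forall>z\<in>S. dd z > 0" "\<exists>\<rho>. \<forall>z\<in>S. (\<Sum>y\<in>S. Mr z y * dd y) = \<rho> * dd z"
proof -
  have "\<exists>d. (\<forall>z\<in>S. d z > 0) \<and> (\<exists>\<rho>. \<forall>z\<in>S. (\<Sum>y\<in>S. Mr z y * d y) = \<rho> * d z)"
    using pf_exists[of S Mr, OF fin S_ne Mr_pos] by blast
  from someI_ex[OF this] show "\<forall>z\<in>S. dd z > 0" "\<exists>\<rho>. \<forall>z\<in>S. (\<Sum>y\<in>S. Mr z y * dd y) = \<rho> * dd z"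
    unfolding dd_def by blast+
qed

lemma Lop_nn: "x \<in> S \<Longrightarrow> Lop x dd z \<ge> 0"
  unfolding Lop_def using dd(1) by (intro sum_nonneg) (auto intro: less_imp_le)

lemma Lop_eig: assumes x: "x \<in> S" shows "\<exists>t\<ge>0. \<forall>z\<in>S. Lop x dd z = t * dd z"
proof -
  obtain \<rho> where \<rho>: "\<forall>z\<in>S. (\<Sum>y\<in>S. Mr z y * dd y) = \<rho> * dd z" using dd(2) by blast
  have eig: "\<forall>z\<in>S. (\<Sum>y\<in>S. Mr z y * Lop x dd y) = \<rho> * Lop x dd z"
  proof
    fix z assume z: "z \<in> S"
    have "(\<Sum>y\<in>S. Mr z y * Lop x dd y) = Lop x (\<lambda>y. \<Sum>y'\<in>S. Mr y y' * dd y') z" using comm[OF x z] .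
    also have "\<dots> = Lop x (\<lambda>y. \<rho> * dd y) z" unfolding Lop_def using \<rho> by (intro sum.cong) auto
    also have "\<dots> = \<rho> * Lop x dd z" unfolding Lop_def by (simp add: sum_distrib_left mult.left_commute)
    finally show "(\<Sum>y\<in>S. Mr z y * Lop x dd y) = \<rho> * Lop x dd z" .
  qed
  show ?thesis
    using pf_unique[of S Mr, OF fin S_ne Mr_pos dd(1) \<rho> _ eig] Lop_nn[OF x] by blast
qed

definition lam :: "'a \<Rightarrow> real" where "lam x = Lop x dd one / dd one"

lemma Lop_lam: assumes x: "x \<in> S" and z: "z \<in> S" shows "Lop x dd z = lam x * dd z"
proof -
  obtain t where t: "t \<ge> 0" "\<forall>z\<in>S. Lop x dd z = t * dd z" using Lop_eig[OF x] by blast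
  have "lam x = t" unfolding lam_def using t one_in dd(1) by auto
  then show ?thesis using t z by simp
qed

lemma lam_nn: "x \<in> S \<Longrightarrow> lam x \<ge> 0"
  unfolding lam_def using Lop_nn dd(1) one_in by (simp add: less_imp_le)

lemma FP_eq: assumes x: "x \<in> S" shows "FPdim S N x = lam x"
proof -
  define E where "E = {r. r \<ge> 0 \<and> fusion_eigenvalue S N x r}"
  have finE: "finite E"
    by (rule finite_subset[OF _ eig_finite[OF fin, of "\<lambda>z y. real (N x y z)"]])
       (auto simp: E_def fusion_eigenvalue_def)
  have inE: "lam x \<in> E"
    unfolding E_def fusion_eigenvalue_def using lam_nn[OF x] dd(1) one_in Lop_lam[OF x]
    by (auto simp: Lop_def intro!: exI[of _ dd] bexI[of _ one])
  have bound: "r \<le> lam x" if r: "r \<in> E" for r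
  proof -
    from r obtain v where r0: "r \<ge> 0" and vne: "\<exists>y\<in>S. v y \<noteq> 0"
      and ev: "\<forall>z\<in>S. (\<Sum>y\<in>S. real (N x y z) * v y) = r * v z"
      unfolding E_def fusion_eigenvalue_def by blast
    obtain y0 where y0: "y0 \<in> S" "v y0 \<noteq> 0" using vne by blast
    define \<mu> where "\<mu> = Max ((\<lambda>z. \<bar>v z\<bar> / dd z) ` S)"
    have "\<mu> \<in> (\<lambda>z. \<bar>v z\<bar> / dd z) ` S" unfolding \<mu>_def using fin S_ne by (intro Max_in) auto
    then obtain z1 where z1: "z1 \<in> S" "\<mu> = \<bar>v z1\<bar> / dd z1" by blast
    have mge: "\<bar>v z\<bar> / dd z \<le> \<mu>" if "z \<in> S" for z unfolding \<mu>_def using fin that by (intro Max_ge) auto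
    have vle: "\<bar>v z\<bar> \<le> \<mu> * dd z" if "z \<in> S" for z
      using mge[OF that] dd(1) that by (simp add: divide_le_eq)
    have \<mu>pos: "\<mu> > 0" using mge[OF y0(1)] y0 dd(1) by (meson divide_pos_pos less_le_trans zero_less_abs_iff)
    have dz1: "dd z1 > 0" using dd(1) z1 by auto
    have vz1: "\<bar>v z1\<bar> = \<mu> * dd z1" using z1 dz1 by simp
    have "r * \<bar>v z1\<bar> = \<bar>\<Sum>y\<in>S. real (N x y z1) * v y\<bar>" using ev z1 r0 by (simp add: abs_mult)
    also have "\<dots> \<le> (\<Sum>y\<in>S. \<bar>real (N x y z1) * v y\<bar>)" by (rule sum_abs)
    also have "\<dots> = (\<Sum>y\<in>S. real (N x y z1) * \<bar>v y\<bar>)" by (simp add: abs_mult)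
    also have "\<dots> \<le> (\<Sum>y\<in>S. real (N x y z1) * (\<mu> * dd y))"
      using vle by (intro sum_mono mult_left_mono) auto
    also have "\<dots> = \<mu> * Lop x dd z1" unfolding Lop_def by (simp add: sum_distrib_left mult.left_commute)
    also have "\<dots> = \<mu> * (lam x * dd z1)" using Lop_lam[OF x z1(1)] by simp
    finally have "r * (\<mu> * dd z1) \<le> lam x * (\<mu> * dd z1)" using vz1 by (simp add: mult_ac)
    then show ?thesis using \<mu>pos dz1 by (simp add: mult_le_cancel_right_pos)
  qed
  show ?thesis unfolding FPdim_def E_def[symmetric] using finE inE bound by (intro Max_eqI) auto
qed

lemma lam_G: assumes g: "g \<in> Ginv S one N dual" shows "lam g = 1"
proof -
  have gS: "g \<in> S" using G_S[OF g] .
  have row: "(\<Sum>z\<in>S. real (N g y z)) = 1" if y: "y \<in> S" for y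
  proof -
    have "(\<Sum>z\<in>S. real (N g y z)) = (\<Sum>z\<in>S. if z = act g y then 1 else 0)"
      using act(2)[OF g y] by (intro sum.cong) auto
    also have "\<dots> = 1" using fin act(1)[OF g y] by simp
    finally show ?thesis .
  qed
  have "(\<Sum>z\<in>S. Lop g dd z) = (\<Sum>y\<in>S. \<Sum>z\<in>S. real (N g y z) * dd y)"
    unfolding Lop_def by (rule sum.swap)
  also have "\<dots> = (\<Sum>y\<in>S. (\<Sum>z\<in>S. real (N g y z)) * dd y)" by (simp add: sum_distrib_right)
  also have "\<dots> = (\<Sum>y\<in>S. dd y)" using row by simp
  finally have A: "(\<Sum>z\<in>S. Lop g dd z) = (\<Sum>y\<in>S. dd y)" .
  have "(\<Sum>z\<in>S. Lop g dd z) = lam g * (\<Sum>y\<in>S. dd y)"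
    using Lop_lam[OF gS] by (simp add: sum_distrib_left)
  moreover have "(\<Sum>y\<in>S. dd y) > 0" using fin S_ne dd(1) by (intro sum_pos) auto
  ultimately show ?thesis using A by simp
qed

lemma lam_act: assumes g: "g \<in> Ginv S one N dual" and x: "x \<in> S" shows "lam (act g x) = lam x"
proof -
  have gS: "g \<in> S" using G_S[OF g] .
  have key: "Lop (act g x) dd z = lam x * dd z" if z: "z \<in> S" for z
  proof -
    have "Lop (act g x) dd z = (\<Sum>y\<in>S. real (\<Sum>v\<in>S. N x y v * N g v z) * dd y)"
      unfolding Lop_def using N_act_left[OF g x _ z] by (intro sum.cong) auto
    also have "\<dots> = (\<Sum>y\<in>S. \<Sum>v\<in>S. real (N g v z) * (real (N x y v) * dd y))"
      by (simp add: sum_distrib_right sum_distrib_left mult_ac)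
    also have "\<dots> = (\<Sum>v\<in>S. \<Sum>y\<in>S. real (N g v z) * (real (N x y v) * dd y))" by (rule sum.swap)
    also have "\<dots> = (\<Sum>v\<in>S. real (N g v z) * Lop x dd v)" unfolding Lop_def by (simp add: sum_distrib_left)
    also have "\<dots> = (\<Sum>v\<in>S. real (N g v z) * (lam x * dd v))" using Lop_lam[OF x] by simp
    also have "\<dots> = lam x * Lop g dd z" unfolding Lop_def by (simp add: sum_distrib_left mult_ac)
    also have "\<dots> = lam x * dd z" using Lop_lam[OF gS z] lam_G[OF g] by simp
    finally show ?thesis .
  qed
  have "lam (act g x) * dd one = lam x * dd one"
    using key[OF one_in] Lop_lam[OF act(1)[OF g x] one_in] by simp
  then show ?thesis using dd(1) one_in by auto
qed

lemma FP_act: "g \<in> Ginv S one N dual \<Longrightarrow> x \<in> S \<Longrightarrow> FPdim S N (act g x) = FPdim S N x"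
  using FP_eq lam_act act(1) by simp

end



definition GrD :: "'a set \<Rightarrow> ('a \<Rightarrow> 'a \<Rightarrow> 'a) \<Rightarrow> 'a \<Rightarrow> 'a monoid" where
  "GrD C m e = \<lparr>carrier = C, mult = m, one = e\<rparr>"

lemma GrD_simps [simp]: "carrier (GrD C m e) = C" "mult (GrD C m e) = m" "monoid.one (GrD C m e) = e"
  by (simp_all add: GrD_def)

context fr
begin

definition Gr :: "'a monoid" where "Gr = GrD (Ginv S one N dual) act one"

lemma Gr_simps [simp]: "carrier Gr = Ginv S one N dual" "mult Gr = act" "monoid.one Gr = one"
  by (simp_all add: Gr_def)

lemma group_Gr: "group Gr"
proof (rule groupI)
  show "x \<otimes>\<^bsub>Gr\<^esub> y \<in> carrier Gr" if "x \<in> carrier Gr" "y \<in> carrier Gr" for x y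
    using that act_closed by simp
  show "\<one>\<^bsub>Gr\<^esub> \<in> carrier Gr" using one_G by simp
  show "x \<otimes>\<^bsub>Gr\<^esub> y \<otimes>\<^bsub>Gr\<^esub> z = x \<otimes>\<^bsub>Gr\<^esub> (y \<otimes>\<^bsub>Gr\<^esub> z)"
    if "x \<in> carrier Gr" "y \<in> carrier Gr" "z \<in> carrier Gr" for x y z
    using that act_comp G_S by simp
  show "\<one>\<^bsub>Gr\<^esub> \<otimes>\<^bsub>Gr\<^esub> x = x" if "x \<in> carrier Gr" for x using that act_one G_S by simp
  show "\<exists>y\<in>carrier Gr. y \<otimes>\<^bsub>Gr\<^esub> x = \<one>\<^bsub>Gr\<^esub>" if "x \<in> carrier Gr" for x
    using that dual_G act_inv by auto
qed

lemma Irr_act: "g \<in> Ginv S one N dual \<Longrightarrow> x \<in> Irr S N \<alpha> \<Longrightarrow> act g x \<in> Irr S N \<alpha>"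
  unfolding Irr_def using act(1) FP_act by auto

lemma action: "group_action Gr (Irr S N \<alpha>) (\<lambda>g. \<lambda>x\<in>Irr S N \<alpha>. act g x)"
  unfolding group_action_def group_hom_def group_hom_axioms_def hom_def
proof (intro conjI group_Gr group_BijGroup CollectI ballI)
  let ?I = "Irr S N \<alpha>"
  have bij: "(\<lambda>x\<in>?I. act g x) \<in> Bij ?I" if g: "g \<in> Ginv S one N dual" for g
    unfolding Bij_def
  proof (intro IntI CollectI)
    show "(\<lambda>x\<in>?I. act g x) \<in> extensional ?I" by simp
    show "bij_betw (\<lambda>x\<in>?I. act g x) ?I ?I"
    proof (rule bij_betwI[where g = "\<lambda>x\<in>?I. act (dual g) x"])
      show "(\<lambda>x\<in>?I. act g x) \<in> ?I \<rightarrow> ?I" using Irr_act[OF g] by auto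
      show "(\<lambda>x\<in>?I. act (dual g) x) \<in> ?I \<rightarrow> ?I" using Irr_act[OF dual_G[OF g]] by auto
      show "(\<lambda>x\<in>?I. act (dual g) x) ((\<lambda>x\<in>?I. act g x) x) = x" if "x \<in> ?I" for x
        using that Irr_act[OF g that] act_inv_x[OF g] by (simp add: Irr_def)
      show "(\<lambda>x\<in>?I. act g x) ((\<lambda>x\<in>?I. act (dual g) x) y) = y" if "y \<in> ?I" for y
        using that Irr_act[OF dual_G[OF g] that] act_inv_x[OF dual_G[OF g]] dual_dual[OF G_S[OF g]]
        by (simp add: Irr_def)
    qed
  qed
  show "(\<lambda>g. \<lambda>x\<in>?I. act g x) \<in> carrier Gr \<rightarrow> carrier (BijGroup ?I)"
    using bij by (auto simp: BijGroup_def)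
  fix g h assume g: "g \<in> carrier Gr" and h: "h \<in> carrier Gr"
  show "(\<lambda>x\<in>?I. act (g \<otimes>\<^bsub>Gr\<^esub> h) x) = (\<lambda>x\<in>?I. act g x) \<otimes>\<^bsub>BijGroup ?I\<^esub> (\<lambda>x\<in>?I. act h x)"
    using bij g h Irr_act act_comp by (auto simp: BijGroup_def compose_def Irr_def)
qed

lemma main:
  assumes p: "prime p" and card: "card (Ginv S one N dual) = p ^ k"
    and cop: "coprime (card (Irr S N \<alpha>)) p"
  shows "\<exists>X \<in> Irr S N \<alpha>. stab S one N dual X = Ginv S one N dual"
proof (rule ccontr)
  assume H: "\<not> ?thesis"
  let ?I = "Irr S N \<alpha>"
  let ?phi = "\<lambda>g. \<lambda>x\<in>?I. act g x"
  interpret A: group_action Gr ?I ?phi by (rule action)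
  have finI: "finite ?I" using fin by (rule finite_subset[rotated]) (auto simp: Irr_def)
  have finG: "finite (Ginv S one N dual)" using fin by (rule finite_subset[rotated]) (auto simp: Ginv_def)
  have orbdvd: "p dvd card (orbit Gr ?phi X)" if X: "X \<in> ?I" for X
  proof -
    have XS: "X \<in> S" using X by (simp add: Irr_def)
    have stabeq: "stabilizer Gr ?phi X = stab S one N dual X"
    proof -
      have "tensor_iso S N g X X \<longleftrightarrow> act g X = X" if g: "g \<in> Ginv S one N dual" for g
        using act_iso[OF g XS _ XS] iso_act[OF g XS] by metis
      then show ?thesis unfolding stabilizer_def stab_def using X by auto
    qed
    have neq: "stab S one N dual X \<noteq> Ginv S one N dual" using H X by auto
    have sub: "stab S one N dual X \<subseteq> Ginv S one N dual" by (auto simp: stab_def)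
    have lt: "card (stab S one N dual X) < p ^ k"
      using psubset_card_mono[OF finG] sub neq card by auto
    have eq: "card (orbit Gr ?phi X) * card (stab S one N dual X) = p ^ k"
      using A.orbit_stabilizer_theorem[OF X] stabeq card by (simp add: order_def)
    then have "card (orbit Gr ?phi X) dvd p ^ k" by (metis dvd_triv_left)
    then obtain i where i: "i \<le> k" "card (orbit Gr ?phi X) = p ^ i"
      using divides_primepow_nat[OF p] by auto
    have "i \<noteq> 0"
    proof
      assume "i = 0"
      then have "card (stab S one N dual X) = p ^ k" using i eq by simp
      then show False using lt by simp
    qed
    then show ?thesis using i by simp
  qed
  have "card ?I = (\<Sum>orb\<in>orbits Gr ?I ?phi. card orb)"
    using A.disjoint_sum[OF finI, of "\<lambda>_. (1::nat)"] by simp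
  moreover have "p dvd (\<Sum>orb\<in>orbits Gr ?I ?phi. card orb)"
    by (rule dvd_sum) (auto simp: orbits_def intro: orbdvd)
  ultimately have "p dvd card ?I" by simp
  then have "is_unit p" using cop by (meson coprime_common_divisor dvd_refl)
  then show False using p by simp
qed

end


theorem lemma2p1:
  fixes S :: "'a set" and one :: 'a and N :: "'a \<Rightarrow> 'a \<Rightarrow> 'a \<Rightarrow> nat"
    and dual :: "'a \<Rightarrow> 'a" and p k :: nat and \<alpha> :: real
  assumes "fusion_ring S one N dual"
    and "prime p" and "card (Ginv S one N dual) = p ^ k"
    and "\<alpha> > 1"
    and "coprime (card (Irr S N \<alpha>)) p"
  shows "\<exists>X \<in> Irr S N \<alpha>. stab S one N dual X = Ginv S one N dual"
proof -
  interpret fr S one N dual using assms(1) by (rule fr.intro)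
  show ?thesis using main[OF assms(2,3,5)] .
qed

end
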